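(* Let $G$ be a 5-vertex-critical $(P_5,\text{chair})$-free graph and let $C=v_1v_2v_3v_4v_5v_1$ be an induced $C_5$ in $G$. Then $S_0=\varnothing$, i.e. every vertex of $V(G)\setminus V(C)$ has a neighbor in $V(C)$.
   Context: All graphs are finite and simple; $P_5$ is the path on 5 vertices; the chair is a $P_4$ plus a vertex adjacent to exactly one of the two middle vertices of the $P_4$; "$H$-free" means no induced subgraph isomorphic to $H$. A graph $G$ is $k$-vertex-critical if $\chi(G)=k$ and $\chi(G-v)<k$ for every $v\in V(G)$. $S_0=\{v\in V(G)\setminus V(C): N(v)\cap V(C)=\varnothing\}$. *)

theory Defs
  imports Main
begin

definition sgraph :: "'a set \<Rightarrow> 'a set set \<Rightarrow> bool" where
  "sgraph V E \<longleftrightarrow> finite V \<and> (\<forall>e\<in>E. \<exists>x y. x \<in> V \<and> y \<in> V \<and> x \<noteq> y \<and> e = {x, y})"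

definition adj :: "'a set set \<Rightarrow> 'a \<Rightarrow> 'a \<Rightarrow> bool" where
  "adj E x y \<longleftrightarrow> {x, y} \<in> E"

definition induced_edges :: "'a set set \<Rightarrow> 'a set \<Rightarrow> 'a set set" where
  "induced_edges E S = {e \<in> E. e \<subseteq> S}"

definition colorable :: "'a set \<Rightarrow> 'a set set \<Rightarrow> nat \<Rightarrow> bool" where
  "colorable V E k \<longleftrightarrow> (\<exists>f :: 'a \<Rightarrow> nat. (\<forall>v\<in>V. f v < k) \<and>
      (\<forall>x\<in>V. \<forall>y\<in>V. adj E x y \<longrightarrow> f x \<noteq> f y))"

definition chromatic_number :: "'a set \<Rightarrow> 'a set set \<Rightarrow> nat" where
  "chromatic_number V E = (LEAST k. colorable V E k)"

definition vertex_critical :: "'a set \<Rightarrow> 'a set set \<Rightarrow> nat \<Rightarrow> bool" where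
  "vertex_critical V E k \<longleftrightarrow> chromatic_number V E = k \<and>
     (\<forall>v\<in>V. chromatic_number (V - {v}) (induced_edges E (V - {v})) < k)"

definition contains_induced :: "'b set \<Rightarrow> 'b set set \<Rightarrow> 'a set \<Rightarrow> 'a set set \<Rightarrow> bool" where
  "contains_induced VH EH V E \<longleftrightarrow> (\<exists>f. inj_on f VH \<and> f ` VH \<subseteq> V \<and>
      (\<forall>x\<in>VH. \<forall>y\<in>VH. adj EH x y \<longleftrightarrow> adj E (f x) (f y)))"

definition H_free :: "'b set \<Rightarrow> 'b set set \<Rightarrow> 'a set \<Rightarrow> 'a set set \<Rightarrow> bool" where
  "H_free VH EH V E \<longleftrightarrow> \<not> contains_induced VH EH V E"

definition P5_V :: "nat set" where "P5_V = {0,1,2,3,4}"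
definition P5_E :: "nat set set" where "P5_E = {{0,1},{1,2},{2,3},{3,4}}"

definition chair_V :: "nat set" where "chair_V = {0,1,2,3,4}"
definition chair_E :: "nat set set" where "chair_E = {{0,1},{1,2},{2,3},{1,4}}"

end

theory Submission
  imports Defs
begin

lemma pig: fixes a1 a2 a3 a4 a5 b c :: nat
 assumes "a1<4" "a2<4" "a3<4" "a4<4" "a5<4" "b<4" "c<4"
 "a1\<noteq>a2" "a2\<noteq>a3" "a3\<noteq>a4" "a4\<noteq>a5" "a5\<noteq>a1"
 "b \<notin> {a1,a2,a3,a4,a5}" "c \<notin> {a1,a2,a3,a4,a5}"
 shows "b = c"
  using assms by (simp add: less_Suc_eq numeral_eq_Suc; presburger)

lemma adjV_lem: "sgraph V E \<Longrightarrow> adj E a b \<Longrightarrow> a \<in> V \<and> b \<in> V \<and> a \<noteq> b"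
  unfolding sgraph_def adj_def by (metis doubleton_eq_iff)

lemma adj_sym: "adj E a b = adj E b a" by (simp add: adj_def insert_commute)

lemma P5_contra:
  assumes "H_free P5_V P5_E V E" "a\<in>V" "b\<in>V" "c\<in>V" "d\<in>V" "e\<in>V" "distinct [a,b,c,d,e]"
   "adj E a b" "adj E b c" "adj E c d" "adj E d e"
   "\<not>adj E a c" "\<not>adj E a d" "\<not> adj E a e" "\<not>adj E b d" "\<not>adj E b e" "\<not>adj E c e" "\<And>z. \<not> adj E z z"
  shows False
proof -
  let ?f = "\<lambda>i::nat. if i=0 then a else if i=1 then b else if i=2 then c else if i=3 then d else e"
  have "contains_induced P5_V P5_E V E"
    unfolding contains_induced_def
    apply (rule exI[of _ ?f])
    using assms by (auto simp: P5_V_def P5_E_def adj_def inj_on_def doubleton_eq_iff insert_commute)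
  with assms(1) show False by (simp add: H_free_def)
qed

lemma chair_contra:
  assumes "H_free chair_V chair_E V E" "a\<in>V" "b\<in>V" "c\<in>V" "d\<in>V" "e\<in>V" "distinct [a,b,c,d,e]"
   "adj E a b" "adj E b c" "adj E c d" "adj E b e"
   "\<not>adj E a c" "\<not>adj E a d" "\<not> adj E a e" "\<not>adj E b d" "\<not>adj E c e" "\<not>adj E d e" "\<And>z. \<not> adj E z z"
  shows False
proof -
  let ?f = "\<lambda>i::nat. if i=0 then a else if i=1 then b else if i=2 then c else if i=3 then d else e"
  have "contains_induced chair_V chair_E V E"
    unfolding contains_induced_def
    apply (rule exI[of _ ?f])
    using assms by (auto simp: chair_V_def chair_E_def adj_def inj_on_def doubleton_eq_iff insert_commute)
  with assms(1) show False by (simp add: H_free_def)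
qed

lemma key1:
  assumes P: "H_free P5_V P5_E V E" and Ch: "H_free chair_V chair_E V E"
   and irr: "\<And>z. \<not> adj E z z"
   and "w1\<in>V" "w2\<in>V" "w3\<in>V" "w4\<in>V" "w5\<in>V" "distinct [w1,w2,w3,w4,w5]"
   and "adj E w1 w2" "adj E w2 w3" "adj E w3 w4" "adj E w4 w5" "adj E w5 w1"
   and "\<not> adj E w1 w3" "\<not> adj E w1 w4" "\<not> adj E w2 w4" "\<not> adj E w2 w5" "\<not> adj E w3 w5"
   and "k \<in> V" "u \<in> V" "k \<notin> {w1,w2,w3,w4,w5}" "u \<notin> {w1,w2,w3,w4,w5}" "k \<noteq> u"
   and "\<not> adj E k w1" "\<not> adj E k w2" "\<not> adj E k w3" "\<not> adj E k w4" "\<not> adj E k w5"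
   and "adj E k u" "adj E u w1" "\<not> adj E u w2"
  shows False
proof (cases "adj E u w3")
  case False
  show False
    by (rule P5_contra[OF P, of k u w1 w2 w3]) (use assms False in \<open>auto simp: adj_sym\<close>)
next
  case T3: True
  show False
  proof (cases "adj E u w4")
    case True
    show False
      by (rule chair_contra[OF Ch, of k u w1 w2 w4]) (use assms True T3 in \<open>auto simp: adj_sym\<close>)
  next
    case False
    show False
      by (rule chair_contra[OF Ch, of w2 w3 u k w4]) (use assms False T3 in \<open>auto simp: adj_sym\<close>)
  qed
qed

lemma adj_induced: "a \<in> S \<Longrightarrow> b \<in> S \<Longrightarrow> adj (induced_edges E S) a b = adj E a b"
  by (auto simp: adj_def induced_edges_def)

lemma colorable_mono: "colorable V E k \<Longrightarrow> k \<le> m \<Longrightarrow> colorable V E m"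
  unfolding colorable_def using order_less_le_trans by blast

lemma colorable_ex:
  assumes "finite V" "\<And>z. \<not> adj E z z"
  shows "\<exists>n. colorable V E n"
proof -
  obtain f :: "'a \<Rightarrow> nat" and n where "f ` V = {i. i < n}" "inj_on f V"
    using finite_imp_inj_to_nat_seg[OF assms(1)] by blast
  then have "colorable V E n" unfolding colorable_def
    by (metis (mono_tags, lifting) assms(2) image_eqI inj_on_contraD mem_Collect_eq)
  then show ?thesis by blast
qed

theorem mainTheorem4:
  fixes V :: "'a set" and E :: "'a set set" and v1 v2 v3 v4 v5 :: 'a
  assumes "sgraph V E"
    and "vertex_critical V E 5"
    and "H_free P5_V P5_E V E"
    and "H_free chair_V chair_E V E"
    and "v1 \<in> V" "v2 \<in> V" "v3 \<in> V" "v4 \<in> V" "v5 \<in> V"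
    and "distinct [v1, v2, v3, v4, v5]"
    and "adj E v1 v2" "adj E v2 v3" "adj E v3 v4" "adj E v4 v5" "adj E v5 v1"
    and "\<not> adj E v1 v3" "\<not> adj E v1 v4" "\<not> adj E v2 v4" "\<not> adj E v2 v5" "\<not> adj E v3 v5"
  shows "{v \<in> V - {v1, v2, v3, v4, v5}. \<forall>c\<in>{v1, v2, v3, v4, v5}. \<not> adj E v c} = {}"
proof (rule ccontr)
  note P = assms(3) and Ch = assms(4)
  define C where "C = {v1, v2, v3, v4, v5}"
  define S0 where "S0 = {v \<in> V - C. \<forall>c\<in>C. \<not> adj E v c}"
  assume "{v \<in> V - {v1, v2, v3, v4, v5}. \<forall>c\<in>{v1, v2, v3, v4, v5}. \<not> adj E v c} \<noteq> {}"
  then obtain x where xS: "x \<in> S0" unfolding S0_def C_def by blast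
  have fin: "finite V" using assms(1) by (simp add: sgraph_def)
  have adjV: "a \<in> V \<and> b \<in> V \<and> a \<noteq> b" if "adj E a b" for a b
    using adjV_lem[OF assms(1) that] .
  have irr: "\<And>z. \<not> adj E z z" using adjV by blast
  have cyc: "adj E v2 v1" "adj E v3 v2" "adj E v4 v3" "adj E v5 v4" "adj E v1 v5"
    "\<not> adj E v3 v1" "\<not> adj E v4 v1" "\<not> adj E v4 v2" "\<not> adj E v5 v2" "\<not> adj E v5 v3"
    using assms(11-20) adj_sym by metis+
  note cy = assms(5-20) cyc
  have c1: "\<forall>c\<in>C. adj E u c" if k: "k \<in> S0" and u: "u \<in> V" "u \<notin> C" "adj E k u" "\<exists>c\<in>C. adj E u c" for k u
  proof -
    have kk: "k \<in> V" "k \<notin> C" "\<forall>c\<in>C. \<not> adj E k c" using k unfolding S0_def by auto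
    have ku: "k \<noteq> u" using u irr by blast
    note H = kk ku u
    have "\<not> (adj E u v1 \<and> \<not> adj E u v2)"
      using key1[OF P Ch irr, of v1 v2 v3 v4 v5 k u] H cy by (auto simp: C_def)
    moreover have "\<not> (adj E u v2 \<and> \<not> adj E u v3)"
      using key1[OF P Ch irr, of v2 v3 v4 v5 v1 k u] H cy by (auto simp: C_def)
    moreover have "\<not> (adj E u v3 \<and> \<not> adj E u v4)"
      using key1[OF P Ch irr, of v3 v4 v5 v1 v2 k u] H cy by (auto simp: C_def)
    moreover have "\<not> (adj E u v4 \<and> \<not> adj E u v5)"
      using key1[OF P Ch irr, of v4 v5 v1 v2 v3 k u] H cy by (auto simp: C_def)
    moreover have "\<not> (adj E u v5 \<and> \<not> adj E u v1)"
      using key1[OF P Ch irr, of v5 v1 v2 v3 v4 k u] H cy by (auto simp: C_def)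
    moreover have "\<not> (adj E u v2 \<and> \<not> adj E u v1)"
      using key1[OF P Ch irr, of v2 v1 v5 v4 v3 k u] H cy by (auto simp: C_def)
    moreover have "\<not> (adj E u v3 \<and> \<not> adj E u v2)"
      using key1[OF P Ch irr, of v3 v2 v1 v5 v4 k u] H cy by (auto simp: C_def)
    moreover have "\<not> (adj E u v4 \<and> \<not> adj E u v3)"
      using key1[OF P Ch irr, of v4 v3 v2 v1 v5 k u] H cy by (auto simp: C_def)
    moreover have "\<not> (adj E u v5 \<and> \<not> adj E u v4)"
      using key1[OF P Ch irr, of v5 v4 v3 v2 v1 k u] H cy by (auto simp: C_def)
    moreover have "\<not> (adj E u v1 \<and> \<not> adj E u v5)"
      using key1[OF P Ch irr, of v1 v5 v4 v3 v2 k u] H cy by (auto simp: C_def)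
    ultimately show ?thesis using u(4) unfolding C_def by blast
  qed
  have c2: "adj E u b" if "a \<in> S0" "b \<in> S0" "adj E a b" "adj E u a" "u \<in> V" "u \<notin> C" "u \<notin> S0"
      "\<forall>c\<in>C. adj E u c" for a b u
  proof (rule ccontr)
    assume nb: "\<not> adj E u b"
    have ab: "a \<noteq> b" using that irr by blast
    show False
      by (rule chair_contra[OF Ch, of v1 u a b v3])
       (use that nb cy ab irr in \<open>auto simp: C_def S0_def adj_sym\<close>)
  qed
  define R where "R = {(p, q). p \<in> S0 \<and> q \<in> S0 \<and> adj E p q}"
  define K where "K = {z. (x, z) \<in> R\<^sup>*}"
  have symR: "sym (R\<^sup>*)" by (rule sym_rtrancl) (auto simp: sym_def R_def adj_sym)
  have KS: "K \<subseteq> S0"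
  proof
    fix z assume "z \<in> K"
    then have "(x, z) \<in> R\<^sup>*" by (simp add: K_def)
    then show "z \<in> S0" by induct (use xS in \<open>auto simp: R_def\<close>)
  qed
  have xK: "x \<in> K" by (simp add: K_def)
  have Kcl: "q \<in> K" if "p \<in> K" "q \<in> S0" "adj E p q" for p q
    using that KS unfolding K_def R_def by (auto intro: rtrancl_into_rtrancl)
  define Y where "Y = {u \<in> V - K. \<exists>k\<in>K. adj E u k}"
  have Yprops: "u \<notin> C \<and> u \<notin> S0 \<and> (\<forall>c\<in>C. adj E u c) \<and> (\<forall>z\<in>K. adj E u z)" if uY: "u \<in> Y" for u
  proof -
    obtain k where k: "k \<in> K" "adj E u k" "u \<in> V" "u \<notin> K" using uY Y_def by blast
    have kS: "k \<in> S0" using k KS by blast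
    have ku: "adj E k u" using k(2) adj_sym by metis
    have uC: "u \<notin> C" using kS ku unfolding S0_def by blast
    have uS: "u \<notin> S0" using Kcl[OF k(1) _ ku] k(4) by blast
    have "\<exists>c\<in>C. adj E u c" using uS uC k(3) unfolding S0_def by blast
    then have uc: "\<forall>c\<in>C. adj E u c" using c1[OF kS k(3) uC ku] by blast
    have "adj E u z" if "z \<in> K" for z
    proof -
      have xk: "(x, k) \<in> R\<^sup>*" "(x, z) \<in> R\<^sup>*" using k(1) that unfolding K_def by auto
      have "(k, x) \<in> R\<^sup>*" using symR xk(1) by (rule symD)
      then have "(k, z) \<in> R\<^sup>*" using xk(2) by (rule rtrancl_trans)
      then show ?thesis
      proof induct
        case base then show ?case using k(2) by simp
      next
        case (step p q)
        from step.hyps(2) have pq: "p \<in> S0" "q \<in> S0" "adj E p q" by (auto simp: R_def)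
        show ?case by (rule c2[OF pq step.hyps(3) k(3) uC uS uc])
      qed
    qed
    then show ?thesis using uC uS uc by blast
  qed
  have crit: "chromatic_number V E = 5"
    and crit2: "\<And>v. v \<in> V \<Longrightarrow> chromatic_number (V - {v}) (induced_edges E (V - {v})) < 5"
    using assms(2) unfolding vertex_critical_def by auto
  have col_del: "\<exists>g::'a \<Rightarrow> nat. (\<forall>z\<in>V-{v}. g z < 4) \<and> (\<forall>z\<in>V-{v}. \<forall>w\<in>V-{v}. adj E z w \<longrightarrow> g z \<noteq> g w)"
    if "v \<in> V" for v
  proof -
    let ?V = "V - {v}" and ?E = "induced_edges E (V - {v})"
    have "\<exists>n. colorable ?V ?E n"
      by (rule colorable_ex) (use fin irr in \<open>auto simp: adj_def induced_edges_def\<close>)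
    then have "colorable ?V ?E (chromatic_number ?V ?E)"
      unfolding chromatic_number_def by (rule LeastI_ex)
    then have "colorable ?V ?E 4" using crit2[OF that] colorable_mono by fastforce
    then obtain f :: "'a \<Rightarrow> nat" where f: "\<forall>z\<in>?V. f z < 4"
      "\<forall>z\<in>?V. \<forall>w\<in>?V. adj ?E z w \<longrightarrow> f z \<noteq> f w" unfolding colorable_def by blast
    have "\<forall>z\<in>?V. \<forall>w\<in>?V. adj E z w \<longrightarrow> f z \<noteq> f w"
      using f(2) adj_induced[where S="?V" and E=E] by blast
    then show ?thesis using f(1) by blast
  qed
  have xV: "x \<in> V" "x \<notin> C" using xS S0_def by auto
  have v1K: "v1 \<notin> K" using KS S0_def C_def by auto
  obtain g :: "'a \<Rightarrow> nat" where g: "\<forall>z\<in>V-{x}. g z < 4" "\<forall>z\<in>V-{x}. \<forall>w\<in>V-{x}. adj E z w \<longrightarrow> g z \<noteq> g w"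
    using col_del[OF xV(1)] by blast
  obtain h :: "'a \<Rightarrow> nat" where h: "\<forall>z\<in>V-{v1}. h z < 4" "\<forall>z\<in>V-{v1}. \<forall>w\<in>V-{v1}. adj E z w \<longrightarrow> h z \<noteq> h w"
    using col_del[OF assms(5)] by blast
  have KV: "K \<subseteq> V" using KS S0_def by auto
  have "colorable V E 4"
  proof (cases "Y = {}")
    case True
    define f where "f z = (if z \<in> K then h z else g z)" for z
    show ?thesis unfolding colorable_def
    proof (intro exI[of _ f] conjI ballI impI)
      fix z assume zV: "z \<in> V"
      show "f z < 4"
      proof (cases "z \<in> K")
        case True
        then have "z \<in> V - {v1}" using zV v1K by blast
        then show ?thesis using h(1) True by (simp add: f_def)
      next
        case False
        then have "z \<in> V - {x}" using zV xK by blast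
        then show ?thesis using g(1) False by (simp add: f_def)
      qed
    next
      fix z w assume zw: "z \<in> V" "w \<in> V" "adj E z w"
      show "f z \<noteq> f w"
      proof (cases "z \<in> K"; cases "w \<in> K")
        assume "z \<in> K" "w \<notin> K"
        moreover have "adj E w z" using zw(3) adj_sym by metis
        ultimately have "w \<in> Y" using zw unfolding Y_def by blast
        then show ?thesis using True by blast
      next
        assume "z \<notin> K" "w \<in> K"
        then have "z \<in> Y" using zw unfolding Y_def by blast
        then show ?thesis using True by blast
      next
        assume a: "z \<in> K" "w \<in> K"
        then have "z \<in> V - {v1}" "w \<in> V - {v1}" using zw v1K by blast+
        then have "h z \<noteq> h w" using h(2) zw(3) by blast
        then show ?thesis using a by (simp add: f_def)
      next
        assume a: "z \<notin> K" "w \<notin> K"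
        then have "z \<in> V - {x}" "w \<in> V - {x}" using zw xK by blast+
        then have "g z \<noteq> g w" using g(2) zw(3) by blast
        then show ?thesis using a by (simp add: f_def)
      qed
    qed
  next
    case False
    then obtain y where yY: "y \<in> Y" by blast
    have yV: "y \<in> V" "y \<noteq> x" "y \<noteq> v1" "y \<notin> K"
      using yY Yprops[OF yY] xK unfolding Y_def C_def by auto
    define c where "c = g y"
    have gC: "g w \<notin> g ` C" if wY: "w \<in> Y" for w
    proof
      assume "g w \<in> g ` C"
      then obtain v where v: "v \<in> C" "g w = g v" by blast
      have "w \<in> V - {x}" "v \<in> V - {x}" using wY xK xV assms(5-9) v(1) unfolding Y_def C_def by auto
      moreover have "adj E w v" using Yprops[OF wY] v(1) by blast
      ultimately show False using g(2) v(2) by blast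
    qed
    have Yc: "g w = c" if wY: "w \<in> Y" for w
    proof -
      have inV: "v1 \<in> V - {x}" "v2 \<in> V - {x}" "v3 \<in> V - {x}" "v4 \<in> V - {x}" "v5 \<in> V - {x}"
        using xV assms(5-9) unfolding C_def by auto
      have wV: "w \<in> V - {x}" "y \<in> V - {x}" using wY yV xK unfolding Y_def by auto
      have lt: "g v1 < 4" "g v2 < 4" "g v3 < 4" "g v4 < 4" "g v5 < 4" "g w < 4" "g y < 4"
        using g(1) inV wV by blast+
      have ne: "g v1 \<noteq> g v2" "g v2 \<noteq> g v3" "g v3 \<noteq> g v4" "g v4 \<noteq> g v5" "g v5 \<noteq> g v1"
        using g(2) inV assms(11-15) by blast+
      have n1: "g w \<notin> {g v1, g v2, g v3, g v4, g v5}" using gC[OF wY] by (simp add: C_def)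
      have n2: "g y \<notin> {g v1, g v2, g v3, g v4, g v5}" using gC[OF yY] by (simp add: C_def)
      show ?thesis unfolding c_def by (rule pig[OF lt ne n1 n2])
    qed
    define \<tau> where "\<tau> i = (if i = h y then c else if i = c then h y else i)" for i
    define f where "f z = (if z \<in> K then \<tau> (h z) else g z)" for z
    have hy: "h y < 4" using h(1) yV by blast
    have c4: "c < 4" using g(1) yV by (auto simp: c_def)
    show ?thesis unfolding colorable_def
    proof (intro exI[of _ f] conjI ballI impI)
      fix z assume zV: "z \<in> V"
      show "f z < 4"
      proof (cases "z \<in> K")
        case True
        then have "z \<in> V - {v1}" using zV v1K by blast
        then have "h z < 4" using h(1) by blast
        then show ?thesis using True hy c4 by (simp add: f_def \<tau>_def)
      next
        case False
        then have "z \<in> V - {x}" using zV xK by blast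
        then show ?thesis using g(1) False by (simp add: f_def)
      qed
    next
      fix z w assume zw: "z \<in> V" "w \<in> V" "adj E z w"
      have cross: "f z \<noteq> f w" if a: "z \<in> K" "w \<notin> K" "z \<in> V" "w \<in> V" "adj E z w" for z w
      proof -
        have "adj E w z" using a(5) adj_sym by metis
        then have wY: "w \<in> Y" using a unfolding Y_def by blast
        have "adj E y z" using Yprops[OF yY] a(1) by blast
        moreover have "y \<in> V - {v1}" "z \<in> V - {v1}" using yV a v1K by blast+
        ultimately have "h y \<noteq> h z" using h(2) by blast
        then show ?thesis using Yc[OF wY] a(1,2) by (auto simp: f_def \<tau>_def)
      qed
      show "f z \<noteq> f w"
      proof (cases "z \<in> K"; cases "w \<in> K")
        assume a: "z \<in> K" "w \<in> K"
        then have "z \<in> V - {v1}" "w \<in> V - {v1}" using zw v1K by blast+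
        then have "h z \<noteq> h w" using h(2) zw(3) by blast
        then show ?thesis using a by (auto simp: f_def \<tau>_def)
      next
        assume a: "z \<notin> K" "w \<notin> K"
        then have "z \<in> V - {x}" "w \<in> V - {x}" using zw xK by blast+
        then have "g z \<noteq> g w" using g(2) zw(3) by blast
        then show ?thesis using a by (simp add: f_def)
      next
        assume "z \<in> K" "w \<notin> K" then show ?thesis using cross zw by blast
      next
        assume "z \<notin> K" "w \<in> K"
        moreover have "adj E w z" using zw(3) adj_sym by metis
        ultimately show ?thesis using cross[of w z] zw(1,2) by metis
      qed
    qed
  qed
  then have "chromatic_number V E \<le> 4" unfolding chromatic_number_def by (rule Least_le)
  with crit show False by simp
qed

end
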